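(* There exists a radial weight $\omega\notin\widehat{\mathcal{D}}$ such that $\widetilde{\omega}$ is a radial weight and $\widetilde{\omega}\in\widehat{\mathcal{D}}$.
   Context: A radial weight is a non-negative $\omega\in L^1([0,1))$, extended to the unit disc by $\omega(z)=\omega(|z|)$, with $\widehat{\omega}(r)=\int_r^1\omega(s)\,ds>0$ for all $0\le r<1$. $\widetilde{\omega}(r)=\frac{\widehat{\omega}(r)}{1-r}$ for $0\le r<1$. A radial weight $\nu$ belongs to $\widehat{\mathcal{D}}$ if there is $C=C(\nu)\ge1$ with $\widehat{\nu}(r)\le C\,\widehat{\nu}\big(\frac{1+r}{2}\big)$ for all $0\le r<1$, where $\widehat\nu(r)=\int_r^1\nu(s)\,ds$. *)

theory Defs
  imports "HOL-Analysis.Analysis"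
begin

text \<open>A radial weight is represented by its radial profile on [0,1).
  omega_hat r = integral of omega over [r,1).\<close>

definition omega_hat :: "(real \<Rightarrow> real) \<Rightarrow> real \<Rightarrow> real" where
  "omega_hat \<omega> r = (LINT s:{r..<1}|lborel. \<omega> s)"

definition radial_weight :: "(real \<Rightarrow> real) \<Rightarrow> bool" where
  "radial_weight \<omega> \<longleftrightarrow>
     (\<forall>r\<in>{0..<1}. 0 \<le> \<omega> r) \<and>
     set_integrable lborel {0..<1} \<omega> \<and>
     (\<forall>r\<in>{0..<1}. omega_hat \<omega> r > 0)"

definition omega_tilde :: "(real \<Rightarrow> real) \<Rightarrow> real \<Rightarrow> real" where
  "omega_tilde \<omega> r = omega_hat \<omega> r / (1 - r)"

definition D_hat :: "(real \<Rightarrow> real) set" where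
  "D_hat = {\<nu>. radial_weight \<nu> \<and>
     (\<exists>C\<ge>1. \<forall>r\<in>{0..<1}. omega_hat \<nu> r \<le> C * omega_hat \<nu> ((1 + r) / 2))}"

end

theory Submission
  imports Defs
begin

definition T :: "nat \<Rightarrow> real" where "T i = (1/2) ^ (i*i)"
definition cc :: "nat \<Rightarrow> real" where "cc i = T i - T (Suc i)"
definition mm :: "nat \<Rightarrow> nat" where "mm i = 4 ^ Suc i"
definition aa :: "nat \<Rightarrow> real" where "aa i = 1 - (1/2) ^ mm i"
definition bb :: "nat \<Rightarrow> real" where "bb i = 1 - (1/2) ^ Suc (mm i)"
definition ll :: "nat \<Rightarrow> real" where "ll i = (1/2) ^ Suc (mm i)"
definition w :: "real \<Rightarrow> real" where
  "w s = (\<Sum>i. (cc i / ll i) * indicator {aa i..<bb i} s)"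
definition psi :: "nat \<Rightarrow> real \<Rightarrow> real" where
  "psi i r = max 0 (min 1 ((bb i - r) / ll i))"
definition H :: "real \<Rightarrow> real" where "H r = (\<Sum>i. cc i * psi i r)"

lemma T_pos: "T i > 0" by (simp add: T_def)
lemma T_Suc: "T i = 2 ^ (2*i+1) * T (Suc i)"
proof -
  have e: "Suc i * Suc i = i*i + (2*i+1)" by simp
  have 1: "T (Suc i) = T i * (1/2)^(2*i+1)" unfolding T_def e by (rule power_add)
  have "(2::real)^(2*i+1) * (1/2)^(2*i+1) = 1" by (simp add: power_mult_distrib[symmetric])
  moreover have "2^(2*i+1) * T (Suc i) = T i * (2^(2*i+1) * (1/2)^(2*i+1))" unfolding 1 by (simp only: mult_ac)
  ultimately show ?thesis by simp
qed
lemma cc_pos: "cc i > 0"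
proof -
  have "(2::real)^(2*i+1) \<ge> 2" using power_increasing[of 1 "2*i+1" "2::real"] by simp
  then have "2^(2*i+1) - 1 > (0::real)" by linarith
  moreover have "cc i = (2^(2*i+1) - 1) * T (Suc i)" unfolding cc_def by (subst T_Suc[of i]) (simp add: left_diff_distrib)
  ultimately show ?thesis using T_pos[of "Suc i"] by simp
qed
lemma T_lim: "T \<longlonglongrightarrow> 0"
proof -
  have "(\<lambda>i. (1/2::real) ^ i) \<longlonglongrightarrow> 0" by (rule LIMSEQ_realpow_zero) auto
  moreover have "filterlim (\<lambda>i::nat. i*i) sequentially sequentially"
    by (rule filterlim_subseq) (auto simp: strict_mono_def intro: mult_strict_mono)
  have "strict_mono (\<lambda>i::nat. i*i)" by (auto simp: strict_mono_def intro: mult_strict_mono)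
  from LIMSEQ_subseq_LIMSEQ[OF calculation(1) this] show ?thesis unfolding T_def o_def .
qed
lemma cc_tail: "(\<lambda>j. cc (j + k)) sums T k"
proof -
  have "(\<lambda>j. T (j+k)) \<longlonglongrightarrow> 0" using T_lim by (rule LIMSEQ_ignore_initial_segment)
  from telescope_sums'[OF this] show ?thesis by (simp add: cc_def)
qed
lemma cc_summable: "summable cc" using cc_tail[of 0] by (simp add: sums_iff)

lemma ll_pos: "ll i > 0" by (simp add: ll_def)
lemma bb_aa: "bb i - aa i = ll i" by (simp add: aa_def bb_def ll_def)
lemma bb_lt1: "bb i < 1" by (simp add: bb_def)
lemma aa_ge0: "0 \<le> aa i" by (simp add: aa_def power_le_one)
lemma mm_mono: "i < j \<Longrightarrow> Suc (mm i) \<le> mm j"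
  unfolding mm_def by (simp add: Suc_le_eq power_strict_increasing)
lemma bb_le_aa: "i < j \<Longrightarrow> bb i \<le> aa j"
proof -
  assume "i < j"
  have "(1/2::real)^mm j \<le> (1/2)^Suc (mm i)" by (rule power_decreasing) (use mm_mono[OF \<open>i<j\<close>] in auto)
  then show ?thesis unfolding aa_def bb_def by simp
qed
lemma aa_lt_bb: "aa i < bb i" using bb_aa[of i] ll_pos[of i] by simp

lemma aa_mono: "k \<le> j \<Longrightarrow> aa k \<le> aa j"
  using bb_le_aa[of k j] aa_lt_bb[of k] by (cases "k = j") auto
lemma bb_mono: "k \<le> j \<Longrightarrow> bb k \<le> bb j"
  using bb_le_aa[of k j] aa_lt_bb[of j] by (cases "k = j") auto

lemma psi_ge0: "0 \<le> psi i r" by (simp add: psi_def)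
lemma psi_le1: "psi i r \<le> 1" by (simp add: psi_def)
lemma psi_one: "r \<le> aa i \<Longrightarrow> psi i r = 1"
proof -
  assume "r \<le> aa i"
  then have "bb i - r \<ge> ll i" using bb_aa[of i] by simp
  then have "(bb i - r) / ll i \<ge> 1" using ll_pos[of i] by simp
  then show ?thesis by (simp add: psi_def)
qed
lemma psi_zero: "bb i \<le> r \<Longrightarrow> psi i r = 0"
proof -
  assume "bb i \<le> r"
  then have "(bb i - r) / ll i \<le> 0" using ll_pos[of i] by (simp add: divide_nonpos_pos)
  then show ?thesis by (simp add: psi_def)
qed
lemma psi_mono: "r \<le> r' \<Longrightarrow> psi i r' \<le> psi i r"
proof -
  assume "r \<le> r'"
  then have "(bb i - r') / ll i \<le> (bb i - r) / ll i" using ll_pos[of i] by (simp add: divide_right_mono)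
  then show ?thesis by (simp add: psi_def)
qed

lemma summable_cpsi: "summable (\<lambda>i. cc i * psi i r)"
proof (rule summable_comparison_test'[OF cc_summable, of 0])
  fix n
  have "norm (cc n * psi n r) = cc n * psi n r" using cc_pos[of n] psi_ge0[of n r] by simp
  also have "\<dots> \<le> cc n" using cc_pos[of n] psi_ge0[of n r] psi_le1[of n r] by (simp add: mult_left_le_one_le)
  finally show "norm (cc n * psi n r) \<le> cc n" .
qed

lemma H_nonneg: "0 \<le> H r"
  unfolding H_def by (rule suminf_nonneg[OF summable_cpsi]) (simp add: cc_pos less_imp_le psi_ge0)

lemma H_mono: "r \<le> r' \<Longrightarrow> H r' \<le> H r"
  unfolding H_def by (rule suminf_le[OF _ summable_cpsi summable_cpsi])
    (simp add: cc_pos psi_mono mult_left_mono less_imp_le)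

lemma H_split: "H r = (\<Sum>n. cc (n+k) * psi (n+k) r) + (\<Sum>j<k. cc j * psi j r)"
  unfolding H_def by (rule suminf_split_initial_segment[OF summable_cpsi])

lemma H_upper: assumes "\<forall>j<k. bb j \<le> r" shows "H r \<le> T k"
proof -
  have "(\<Sum>j<k. cc j * psi j r) = 0" using assms psi_zero by simp
  moreover have "(\<Sum>n. cc (n+k) * psi (n+k) r) \<le> (\<Sum>n. cc (n+k))"
    apply (rule suminf_le)
    using cc_pos psi_le1 psi_ge0 summable_ignore_initial_segment[OF summable_cpsi[of r], of k] summable_ignore_initial_segment[OF cc_summable, of k]
    by (auto intro!: mult_left_le_one_le less_imp_le)
  moreover have "(\<Sum>n. cc (n+k)) = T k" using cc_tail[of k] by (simp add: sums_iff)
  ultimately show ?thesis using H_split[of r k] by simp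
qed

lemma H_lower: assumes "r \<le> aa k" shows "T k \<le> H r"
proof -
  have "(\<Sum>j<k. cc j * psi j r) \<ge> 0" by (intro sum_nonneg) (simp add: cc_pos less_imp_le psi_ge0)
  moreover have "\<And>n. psi (n+k) r = 1" using assms aa_mono[of k] by (intro psi_one) (meson le_add2 order_trans)
  then have "(\<Sum>n. cc (n+k) * psi (n+k) r) = T k" using cc_tail[of k] by (simp add: sums_iff)
  ultimately show ?thesis using H_split[of r k] by simp
qed

lemma J_unique: "s \<in> {aa i..<bb i} \<Longrightarrow> s \<in> {aa j..<bb j} \<Longrightarrow> i = j"
  using bb_le_aa[of i j] bb_le_aa[of j i] by (cases i j rule: linorder_cases) auto

lemma J_finite: "finite {i. s \<in> {aa i..<bb i}}"
proof (cases "\<exists>i. s \<in> {aa i..<bb i}")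
  case True
  then obtain i0 where "s \<in> {aa i0..<bb i0}" by blast
  then have "{i. s \<in> {aa i..<bb i}} \<subseteq> {i0}" using J_unique by blast
  then show ?thesis using finite_subset by blast
next
  case False
  then have "{i. s \<in> {aa i..<bb i}} = {}" by blast
  then show ?thesis by (metis finite.emptyI)
qed

lemma summable_J: "summable (\<lambda>i. f i * indicator {aa i..<bb i} s :: real)"
  by (rule summable_finite[OF J_finite[of s]]) (simp add: indicator_def)

lemma int_piece: "integral\<^sup>L lborel (\<lambda>s. indicator {r..<1} s *\<^sub>R ((cc i / ll i) * indicator {aa i..<bb i} s)) = cc i * psi i r"
  and int_piece_int: "integrable lborel (\<lambda>s. indicator {r..<1} s *\<^sub>R ((cc i / ll i) * indicator {aa i..<bb i} s))"
proof -
  have eq: "(\<lambda>s. indicator {r..<1} s *\<^sub>R ((cc i / ll i) * indicator {aa i..<bb i} s)) =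
        (\<lambda>s. (cc i / ll i) * indicator {max r (aa i)..<bb i} s)"
    using bb_lt1[of i] by (auto simp: indicator_def)
  have fin: "emeasure lborel {max r (aa i)..<bb i} < \<infinity>"
    by (cases "max r (aa i) \<le> bb i") auto
  show "integrable lborel (\<lambda>s. indicator {r..<1} s *\<^sub>R ((cc i / ll i) * indicator {aa i..<bb i} s))"
    unfolding eq by (intro integrable_mult_right integrable_real_indicator fin) simp
  have "integral\<^sup>L lborel (\<lambda>s. (cc i / ll i) * indicator {max r (aa i)..<bb i} s) = (cc i / ll i) * measure lborel {max r (aa i)..<bb i}"
    by simp
  also have "\<dots> = cc i * psi i r"
  proof (cases "r \<le> aa i")
    case True
    then show ?thesis using psi_one[OF True] bb_aa[of i] aa_lt_bb[of i] ll_pos[of i] by simp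
  next
    case False
    show ?thesis
    proof (cases "r < bb i")
      case True
      have "(bb i - r) / ll i \<le> 1" using False bb_aa[of i] ll_pos[of i] by simp
      moreover have "(bb i - r) / ll i \<ge> 0" using True ll_pos[of i] by simp
      ultimately have "psi i r = (bb i - r) / ll i" by (simp add: psi_def)
      then show ?thesis using False True by simp
    next
      case F2: False
      then show ?thesis using psi_zero[of i r] False by simp
    qed
  qed
  finally show "integral\<^sup>L lborel (\<lambda>s. indicator {r..<1} s *\<^sub>R ((cc i / ll i) * indicator {aa i..<bb i} s)) = cc i * psi i r"
    unfolding eq .
qed

lemma w_hat: "set_integrable lborel {r..<1} w" "(LINT s:{r..<1}|lborel. w s) = H r"
proof -
  let ?g = "\<lambda>i s. indicator {r..<1} s *\<^sub>R ((cc i / ll i) * indicator {aa i..<bb i} s)"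
  have eqf: "(\<lambda>s. indicator {r..<1} s *\<^sub>R w s) = (\<lambda>s. \<Sum>i. ?g i s)"
  proof
    fix s
    show "indicator {r..<1} s *\<^sub>R w s = (\<Sum>i. ?g i s)"
      unfolding w_def real_scaleR_def by (rule suminf_mult[OF summable_J, symmetric])
  qed
  have int: "\<And>i. integrable lborel (?g i)" by (rule int_piece_int)
  have summ: "AE s in lborel. summable (\<lambda>i. norm (?g i s))"
    by (rule AE_I2, rule summable_finite[OF J_finite]) (auto simp: indicator_def)
  have nrm: "\<And>i. (\<lambda>s. norm (?g i s)) = ?g i"
    using cc_pos ll_pos by (auto simp: indicator_def less_imp_le intro!: ext)
  have sums: "summable (\<lambda>i. \<integral>s. norm (?g i s) \<partial>lborel)"
    unfolding nrm int_piece by (rule summable_cpsi)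
  show "set_integrable lborel {r..<1} w"
    unfolding set_integrable_def eqf by (rule integrable_suminf[OF int summ sums])
  show "(LINT s:{r..<1}|lborel. w s) = H r"
    unfolding set_lebesgue_integral_def eqf integral_suminf[OF int summ sums] int_piece H_def ..
qed

lemma hat_w: "omega_hat w r = H r" unfolding omega_hat_def by (rule w_hat(2))

lemma mm_ge: "k \<le> mm k"
proof -
  have "k < 2^k" by (rule less_exp)
  also have "(2::nat)^k \<le> 4^k" by (simp add: power_mono)
  also have "(4::nat)^k \<le> 4^Suc k" by simp
  finally show ?thesis unfolding mm_def by simp
qed

lemma exists_aa: assumes "r < 1" shows "\<exists>k. r \<le> aa k"
proof -
  obtain k where k: "(1/2::real)^k < 1 - r" using real_arch_pow_inv[of "1-r" "1/2"] assms by auto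
  have "(1/2::real)^mm k \<le> (1/2)^k" by (rule power_decreasing[OF mm_ge]) auto
  then show ?thesis using k unfolding aa_def by (intro exI[of _ k]) linarith
qed

lemma H_pos: assumes "r < 1" shows "H r > 0"
proof -
  obtain k where "r \<le> aa k" using exists_aa[OF assms] by blast
  from H_lower[OF this] T_pos[of k] show ?thesis by simp
qed

lemma w_nonneg: "0 \<le> w s"
  unfolding w_def by (rule suminf_nonneg[OF summable_J]) (simp add: cc_pos ll_pos less_imp_le)

lemma w_radial: "radial_weight w"
  unfolding radial_weight_def hat_w using w_nonneg w_hat(1)[of 0] H_pos by auto

lemma bb_half: "(1 + aa k) / 2 = bb k"
  unfolding aa_def bb_def by simp

lemma w_not_D: "w \<notin> D_hat"
proof
  assume "w \<in> D_hat"
  then obtain C where C: "C \<ge> 1" "\<forall>r\<in>{0..<1}. omega_hat w r \<le> C * omega_hat w ((1 + r) / 2)"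
    unfolding D_hat_def by auto
  obtain n where n: "C < 2^n" using real_arch_pow[of 2 C] by auto
  have "(2::real)^n \<le> 2^(2*n+1)" by (rule power_increasing) auto
  with n have Cn: "C < 2^(2*n+1)" by simp
  have "aa n \<in> {0..<1}" using aa_ge0[of n] aa_lt_bb[of n] bb_lt1[of n] by simp
  with C have "H (aa n) \<le> C * H ((1 + aa n) / 2)" unfolding hat_w by blast
  then have "H (aa n) \<le> C * H (bb n)" unfolding bb_half .
  moreover have "T n \<le> H (aa n)" by (rule H_lower) simp
  moreover have "H (bb n) \<le> T (Suc n)" by (rule H_upper) (simp add: bb_mono)
  moreover have "C * T (Suc n) < T n" using T_Suc[of n] Cn T_pos[of "Suc n"] by simp
  ultimately show False using C(1) by (smt (verit) mult_left_mono)
qed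

lemma set_integral_nonneg_real:
  fixes f :: "real \<Rightarrow> real"
  assumes "\<And>x. x \<in> A \<Longrightarrow> 0 \<le> f x"
  shows "0 \<le> (LINT x:A|M. f x)"
  unfolding set_lebesgue_integral_def
  by (rule integral_nonneg_AE, rule AE_I2) (auto simp: indicator_def assms)

lemma log_icc:
  fixes u v :: real
  assumes "u \<le> v" "v < 1"
  shows "integrable lborel (\<lambda>s. 1/(1-s) * indicator {u..v} s)"
    and "integral\<^sup>L lborel (\<lambda>s. 1/(1-s) * indicator {u..v} s) = ln (1-u) - ln (1-v)"
proof -
  have cont: "continuous_on {u..v} (\<lambda>s. 1/(1-s::real))"
    using assms by (intro continuous_intros) auto
  show "integrable lborel (\<lambda>s. 1/(1-s) * indicator {u..v} s)"
    using borel_integrable_atLeastAtMost'[OF cont] unfolding set_integrable_def by (simp add: mult.commute)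
  have "integral\<^sup>L lborel (\<lambda>s. indicator {u..v} s *\<^sub>R (1/(1-s))) = (- ln (1-v)) - (- ln (1-u))"
  proof (rule integral_FTC_atLeastAtMost[OF assms(1) _ cont])
    fix x assume x: "u \<le> x" "x \<le> v"
    then have "x < 1" using assms by simp
    then have "((\<lambda>s. - ln (1-s)) has_real_derivative (1/(1-x))) (at x within {u..v})"
      by (auto intro!: derivative_eq_intros simp: field_simps)
    then show "((\<lambda>s. - ln (1-s)) has_vector_derivative (1/(1-x))) (at x within {u..v})"
      by (simp add: has_real_derivative_iff_has_vector_derivative)
  qed
  then show "integral\<^sup>L lborel (\<lambda>s. 1/(1-s) * indicator {u..v} s) = ln (1-u) - ln (1-v)"
    by (simp add: mult.commute)
qed

lemma log_ico:
  fixes u v :: real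
  assumes "u \<le> v" "v < 1"
  shows "set_integrable lborel {u..<v} (\<lambda>s. 1/(1-s))"
    and "(LINT s:{u..<v}|lborel. 1/(1-s)) = ln (1-u) - ln (1-v)"
proof -
  have i: "set_integrable lborel {u..v} (\<lambda>s. 1/(1-s))"
    using log_icc(1)[OF assms] unfolding set_integrable_def by (simp add: mult.commute)
  show "set_integrable lborel {u..<v} (\<lambda>s. 1/(1-s))"
    by (rule set_integrable_subset[OF i]) auto
  have "(LINT s:{u..<v}|lborel. 1/(1-s)) = (LINT s:{u..v}|lborel. 1/(1-s))"
    by (rule set_integral_discrete_difference[where X="{v}"]) auto
  also have "\<dots> = ln (1-u) - ln (1-v)"
    using log_icc(2)[OF assms] unfolding set_lebesgue_integral_def by (simp add: mult.commute)
  finally show "(LINT s:{u..<v}|lborel. 1/(1-s)) = ln (1-u) - ln (1-v)" .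
qed

lemma nat_ineq: "3*i \<le> i*i + (4::nat)"
proof (cases "3 \<le> i")
  case True
  then have "3*i \<le> i*i" by (simp add: mult_le_mono1)
  then show ?thesis by linarith
next
  case False
  then have "i = 0 \<or> i = 1 \<or> i = 2" by auto
  then show ?thesis by auto
qed

lemma aux_frac: "x > 0 \<Longrightarrow> y > 0 \<Longrightarrow> z*y \<le> 16*x \<Longrightarrow> 8*z/x \<le> 128/(y::real)"
  by (simp add: field_simps)

lemma T_bound: "T i * real (Suc (mm i)) * ln 2 \<le> 128 * ln 2 * (1/2)^i"
proof -
  have "(2::real)^(3*i) \<le> 2^(i*i+4)" by (rule power_increasing[OF nat_ineq]) auto
  moreover have "(2::real)^(2*i) * 2^i = 2^(3*i)"
    by (metis power_add mult_Suc numeral_3_eq_3 numeral_2_eq_2 mult_2 add.commute)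
  moreover have "(2::real)^(i*i+4) = 16 * 2^(i*i)" by (simp add: power_add)
  ultimately have a: "(2::real)^(2*i) * 2^i \<le> 16 * 2^(i*i)" by simp
  have f4: "(1::real) \<le> 4^i" by simp
  have "real (Suc (mm i)) = 4 * 4^i + 1" unfolding mm_def by simp
  also have "\<dots> \<le> 8 * 4^i" using f4 by linarith
  also have "(4::real)^i = 2^(2*i)" by (simp add: power_mult)
  finally have b: "real (Suc (mm i)) \<le> 8 * 2^(2*i)" .
  have e1: "T i = 1 / 2^(i*i)" unfolding T_def by (simp add: power_one_over)
  have "T i * real (Suc (mm i)) = real (Suc (mm i)) / 2^(i*i)" unfolding e1 by simp
  also have "\<dots> \<le> 8 * 2^(2*i) / 2^(i*i)" using b by (simp add: divide_right_mono)
  also have "\<dots> \<le> 128 / 2^i" by (rule aux_frac[OF _ _ a]) auto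
  also have "\<dots> = 128 * (1/2)^i" by (simp add: power_one_over)
  finally have "T i * real (Suc (mm i)) \<le> 128 * (1/2)^i" .
  then have "T i * real (Suc (mm i)) * ln 2 \<le> 128 * (1/2)^i * ln 2"
    using ln_gt_zero[of 2] by (intro mult_right_mono) auto
  then show ?thesis by (simp add: mult.commute mult.left_commute)
qed

lemma ln_bb: "- ln (1 - bb i) = real (Suc (mm i)) * ln 2"
  unfolding bb_def by (simp add: ln_realpow ln_div algebra_simps)

lemma psi_meas[measurable]: "psi i \<in> borel_measurable borel"
  unfolding psi_def using ll_pos[of i]
  by (intro borel_measurable_continuous_onI continuous_intros) auto

definition Ht :: "real \<Rightarrow> real" where "Ht s = H s / (1 - s)"

lemma tilde_w: "omega_tilde w = Ht"
  unfolding omega_tilde_def Ht_def hat_w ..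

lemma Ht_integrable: "set_integrable lborel {0..<1} Ht"
proof -
  let ?f = "\<lambda>i s. indicator {0..<1} s *\<^sub>R (cc i * psi i s / (1-s))"
  let ?g = "\<lambda>i s. cc i * (1/(1-s) * indicator {0..bb i} s)"
  have eqf: "(\<lambda>s. indicator {0..<1} s *\<^sub>R Ht s) = (\<lambda>s. \<Sum>i. ?f i s)"
  proof
    fix s
    show "indicator {0..<1} s *\<^sub>R Ht s = (\<Sum>i. ?f i s)"
    proof -
      have "(\<Sum>i. cc i * psi i s) / (1-s) = (\<Sum>i. cc i * psi i s / (1-s))"
        by (rule suminf_divide[OF summable_cpsi, symmetric])
      moreover have sm: "summable (\<lambda>i. cc i * psi i s / (1-s))" by (rule summable_divide[OF summable_cpsi])
      ultimately have "indicator {0..<1} s * ((\<Sum>i. cc i * psi i s) / (1-s)) = (\<Sum>i. indicator {0..<1} s * (cc i * psi i s / (1-s)))"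
        using suminf_mult[OF sm, of "indicator {0..<1} s"] by simp
      then show ?thesis unfolding Ht_def H_def real_scaleR_def .
    qed
  qed
  have meas: "\<And>i. ?f i \<in> borel_measurable lborel" unfolding measurable_lborel2
    by (intro borel_measurable_scaleR borel_measurable_indicator borel_measurable_divide borel_measurable_times borel_measurable_const borel_measurable_diff psi_meas measurable_ident_sets) auto
  have gint: "\<And>i. integrable lborel (?g i)"
  proof -
    fix i
    have "0 \<le> bb i" using aa_ge0[of i] aa_lt_bb[of i] by simp
    then show "integrable lborel (?g i)" by (rule integrable_mult_right[OF log_icc(1)[OF _ bb_lt1]])
  qed
  have bnd: "\<And>i s. norm (?f i s) \<le> ?g i s"
  proof -
    fix i s
    show "norm (?f i s) \<le> ?g i s"
    proof (cases "s \<in> {0..<1}")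
      case False
      then show ?thesis using cc_pos[of i] bb_lt1[of i] by (auto simp: indicator_def)
    next
      case True
      show ?thesis
      proof (cases "s < bb i")
        case True
        with \<open>s \<in> {0..<1}\<close> have "norm (?f i s) = cc i * psi i s / (1-s)" using cc_pos[of i] psi_ge0[of i s] by simp
        also have "\<dots> \<le> cc i * (1/(1-s))" using \<open>s \<in> {0..<1}\<close> psi_le1[of i s] cc_pos[of i]
          by (simp add: divide_right_mono mult_left_le_one_le less_imp_le)
        finally show ?thesis using True \<open>s \<in> {0..<1}\<close> by simp
      next
        case False
        then show ?thesis using psi_zero[of i s] cc_pos[of i] \<open>s \<in> {0..<1}\<close> by (auto simp: indicator_def)
      qed
    qed
  qed
  have nn: "\<And>i s. 0 \<le> ?f i s"
  proof -
    fix i s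
    show "0 \<le> ?f i s"
    proof (cases "s \<in> {0..<1}")
      case True
      then have "0 < 1 - s" by simp
      then show ?thesis using True cc_pos[of i] psi_ge0[of i s] by simp
    qed simp
  qed
  have nrm: "\<And>i s. norm (?f i s) = ?f i s" using nn by (simp del: real_scaleR_def)
  have fint: "\<And>i. integrable lborel (?f i)"
  proof (rule Bochner_Integration.integrable_bound[OF gint meas])
    fix i
    show "AE s in lborel. norm (?f i s) \<le> norm (?g i s)"
      by (rule AE_I2, rule order_trans[OF bnd], simp only: real_norm_def abs_ge_self)
  qed
  have summ: "AE s in lborel. summable (\<lambda>i. norm (?f i s))"
  proof (rule AE_I2)
    fix s
    show "summable (\<lambda>i. norm (?f i s))" unfolding nrm unfolding real_scaleR_def
      by (rule summable_mult[OF summable_divide[OF summable_cpsi]])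
  qed
  have le: "\<And>i. (\<integral>s. norm (?f i s) \<partial>lborel) \<le> cc i * (real (Suc (mm i)) * ln 2)"
  proof -
    fix i
    have b0: "0 \<le> bb i" using aa_ge0[of i] aa_lt_bb[of i] by simp
    have "(\<integral>s. norm (?f i s) \<partial>lborel) \<le> integral\<^sup>L lborel (?g i)"
      by (rule integral_mono[OF integrable_norm[OF fint] gint bnd])
    also have "integral\<^sup>L lborel (?g i) = cc i * integral\<^sup>L lborel (\<lambda>s. 1/(1-s) * indicator {0..bb i} s)"
      by (rule integral_mult_right_zero)
    also have "integral\<^sup>L lborel (\<lambda>s. 1/(1-s) * indicator {0..bb i} s) = ln (1 - 0) - ln (1 - bb i)"
      by (rule log_icc(2)[OF b0 bb_lt1])
    also have "ln (1 - 0) - ln (1 - bb i) = real (Suc (mm i)) * ln 2" using ln_bb[of i] by simp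
    finally show "(\<integral>s. norm (?f i s) \<partial>lborel) \<le> cc i * (real (Suc (mm i)) * ln 2)" .
  qed
  have sums: "summable (\<lambda>i. \<integral>s. norm (?f i s) \<partial>lborel)"
  proof (rule summable_comparison_test'[where g="\<lambda>i. 128 * ln 2 * (1/2)^i" and N=0])
    show "summable (\<lambda>i. 128 * ln 2 * (1/2::real)^i)" by (intro summable_mult summable_geometric) simp
    fix i
    have "cc i \<le> T i" unfolding cc_def using T_pos[of "Suc i"] by simp
    moreover have "0 \<le> real (Suc (mm i)) * ln 2" using ln_gt_zero[of 2] by simp
    ultimately have "cc i * (real (Suc (mm i)) * ln 2) \<le> T i * (real (Suc (mm i)) * ln 2)"
      by (rule mult_right_mono)
    with le[of i] T_bound[of i] have "(\<integral>s. norm (?f i s) \<partial>lborel) \<le> 128 * ln 2 * (1/2)^i"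
      by (simp only: mult.assoc)
    moreover have "0 \<le> (\<integral>s. norm (?f i s) \<partial>lborel)" by (rule integral_nonneg_AE) simp
    ultimately show "norm (\<integral>s. norm (?f i s) \<partial>lborel) \<le> 128 * ln 2 * (1/2)^i" by simp
  qed
  show ?thesis unfolding set_integrable_def eqf by (rule integrable_suminf[OF fint summ sums])
qed


lemma Ht_int_sub: "A \<subseteq> {0..<1} \<Longrightarrow> A \<in> sets lborel \<Longrightarrow> set_integrable lborel A Ht"
  by (rule set_integrable_subset[OF Ht_integrable])

lemma Ht_nonneg: "s < 1 \<Longrightarrow> 0 \<le> Ht s"
  unfolding Ht_def using H_nonneg[of s] by simp

lemma ln_half_pow: "ln ((1/2::real)^n) = - real n * ln 2"
  by (simp add: ln_realpow ln_div)

lemma pow_ineq: "(2::real)^(2*k+1) \<le> 3 * real (mm k) - 2"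
proof -
  have "(2::real)^(2*k+1) = 2 * 4^k" by (simp add: power_mult)
  moreover have "real (mm k) = 4 * 4^k" unfolding mm_def by simp
  moreover have "(1::real) \<le> 4^k" by simp
  ultimately show ?thesis by linarith
qed

lemma HT_main:
  fixes r :: real
  assumes r: "0 \<le> r" "r < 1"
  shows "(LINT s:{r..<1}|lborel. Ht s) \<le> 2 * (LINT s:{(1+r)/2..<1}|lborel. Ht s)"
    and "0 < (LINT s:{r..<1}|lborel. Ht s)"
proof -
  define q where "q = (1+r)/2"
  have ex: "\<exists>k. r < bb k" using exists_aa[OF r(2)] aa_lt_bb by (meson order_le_less_trans)
  define k where "k = (LEAST k. r < bb k)"
  have rk: "r < bb k" unfolding k_def by (rule LeastI_ex[OF ex])
  have jk: "\<forall>j<k. bb j \<le> r" unfolding k_def using not_less_Least by (metis not_less)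
  define A where "A = aa (Suc k)"
  have q: "r \<le> q" "q < 1" "0 \<le> q" using r unfolding q_def by auto
  have mmS: "mm (Suc k) = 4 * mm k" unfolding mm_def by simp
  have mm4: "4 \<le> mm k" unfolding mm_def by simp
  have e: "(1/2::real)^(Suc (Suc (mm k))) = (1 - bb k) / 2" unfolding bb_def by simp
  have qq: "1 - q = (1 - r) / 2" unfolding q_def by (simp add: field_simps)
  have "(1 - bb k)/2 < (1 - r)/2" using rk by simp
  then have q1: "(1/2)^(Suc (Suc (mm k))) < 1 - q" unfolding e qq .
  have A1: "1 - A = (1/2)^(4 * mm k)" unfolding A_def aa_def mmS by simp
  have "(1/2::real)^(4 * mm k) \<le> (1/2)^(Suc (Suc (mm k)))" by (rule power_decreasing) (use mm4 in auto)
  then have qA: "q \<le> A" using q1 A1 by linarith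
  have A_lt: "A < 1" unfolding A_def aa_def by simp
  have lnA: "ln (1 - q) - ln (1 - A) \<ge> (3 * real (mm k) - 2) * ln 2"
  proof -
    have "ln ((1/2)^(Suc (Suc (mm k)))) \<le> ln (1 - q)" using q1 by (intro ln_mono) auto
    moreover have "ln (1 - A) = - real (4 * mm k) * ln 2" unfolding A1 ln_half_pow ..
    ultimately show ?thesis unfolding ln_half_pow by (simp add: algebra_simps)
  qed
  have s1: "(LINT s:{r..<1}|lborel. Ht s) = (LINT s:{r..<q}|lborel. Ht s) + (LINT s:{q..<1}|lborel. Ht s)"
  proof -
    have "{r..<1} = {r..<q} \<union> {q..<1}" using q by auto
    then show ?thesis
      by (simp only:) (rule set_integral_Un, auto intro!: Ht_int_sub, (use r q in linarith)+)
  qed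
  have s2: "(LINT s:{q..<1}|lborel. Ht s) = (LINT s:{q..<A}|lborel. Ht s) + (LINT s:{A..<1}|lborel. Ht s)"
  proof -
    have "{q..<1} = {q..<A} \<union> {A..<1}" using qA A_lt by auto
    then show ?thesis
      by (simp only:) (rule set_integral_Un, auto intro!: Ht_int_sub, (use q qA A_lt in linarith)+)
  qed
  have I1ge: "0 \<le> (LINT s:{r..<q}|lborel. Ht s)" by (rule set_integral_nonneg_real) (use q in \<open>auto intro: Ht_nonneg\<close>)
  have I3ge: "0 \<le> (LINT s:{A..<1}|lborel. Ht s)" by (rule set_integral_nonneg_real) (auto intro: Ht_nonneg)
  have I1le: "(LINT s:{r..<q}|lborel. Ht s) \<le> H r * ln 2"
  proof -
    have "(LINT s:{r..<q}|lborel. Ht s) \<le> (LINT s:{r..<q}|lborel. H r * (1/(1-s)))"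
    proof (rule set_integral_mono)
      show "set_integrable lborel {r..<q} Ht" by (rule Ht_int_sub) (use r q in auto)
      show "set_integrable lborel {r..<q} (\<lambda>s. H r * (1/(1-s)))"
        by (rule set_integrable_mult_right, rule log_ico(1)) (use q in auto)
      fix s assume "s \<in> {r..<q}"
      then have "r \<le> s" "s < 1" using q by auto
      then show "Ht s \<le> H r * (1/(1-s))" unfolding Ht_def using H_mono[of r s]
        by (simp add: divide_right_mono)
    qed
    also have "\<dots> = H r * (LINT s:{r..<q}|lborel. 1/(1-s))" by (rule set_integral_mult_right)
    also have "\<dots> = H r * (ln (1-r) - ln (1-q))" using log_ico(2)[of r q] q by simp
    also have "ln (1-r) - ln (1-q) = ln 2"
    proof -
      have h: "1 - r = 2 * (1 - q)" unfolding q_def by (simp add: field_simps)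
      have "ln (1-r) = ln 2 + ln (1-q)" unfolding h using q by (intro ln_mult_pos) auto
      then show ?thesis by simp
    qed
    finally show ?thesis .
  qed
  have I2ge: "T (Suc k) * (ln (1 - q) - ln (1 - A)) \<le> (LINT s:{q..<A}|lborel. Ht s)"
  proof -
    have "(LINT s:{q..<A}|lborel. T (Suc k) * (1/(1-s))) \<le> (LINT s:{q..<A}|lborel. Ht s)"
    proof (rule set_integral_mono)
      show "set_integrable lborel {q..<A} Ht" by (rule Ht_int_sub) (use q qA A_lt in auto)
      show "set_integrable lborel {q..<A} (\<lambda>s. T (Suc k) * (1/(1-s)))"
        by (rule set_integrable_mult_right, rule log_ico(1)) (use qA A_lt in auto)
      fix s assume "s \<in> {q..<A}"
      then have "s \<le> aa (Suc k)" "s < 1" using A_lt unfolding A_def by auto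
      then show "T (Suc k) * (1/(1-s)) \<le> Ht s" unfolding Ht_def using H_lower[of s "Suc k"]
        by (simp add: divide_right_mono)
    qed
    moreover have "(LINT s:{q..<A}|lborel. T (Suc k) * (1/(1-s))) = T (Suc k) * (LINT s:{q..<A}|lborel. 1/(1-s))"
      by (rule set_integral_mult_right)
    moreover have "(LINT s:{q..<A}|lborel. 1/(1-s)) = ln (1 - q) - ln (1 - A)"
      by (rule log_ico(2)[OF qA A_lt])
    ultimately show ?thesis by simp
  qed
  have Hr: "H r \<le> T k" by (rule H_upper[OF jk])
  have key: "H r * ln 2 \<le> T (Suc k) * (ln (1 - q) - ln (1 - A))"
  proof -
    have l2: "0 < ln (2::real)" by simp
    have "H r * ln 2 \<le> T k * ln 2" using Hr l2 by (simp add: mult_right_mono)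
    also have "\<dots> = T (Suc k) * (2^(2*k+1) * ln 2)" using T_Suc[of k] by simp
    also have "\<dots> \<le> T (Suc k) * ((3 * real (mm k) - 2) * ln 2)"
      using pow_ineq[of k] l2 T_pos[of "Suc k"] by (intro mult_left_mono mult_right_mono) auto
    also have "\<dots> \<le> T (Suc k) * (ln (1 - q) - ln (1 - A))"
      using lnA T_pos[of "Suc k"] by (intro mult_left_mono) auto
    finally show ?thesis .
  qed
  have pos: "0 < T (Suc k) * (ln (1 - q) - ln (1 - A))"
  proof -
    have "0 < (3 * real (mm k) - 2) * ln 2" using mm4 by simp
    then show ?thesis using lnA T_pos[of "Suc k"] by simp
  qed
  show "(LINT s:{r..<1}|lborel. Ht s) \<le> 2 * (LINT s:{(1+r)/2..<1}|lborel. Ht s)"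
    using s1 s2 I1le I2ge I3ge key unfolding q_def[symmetric] by linarith
  show "0 < (LINT s:{r..<1}|lborel. Ht s)"
    using s1 s2 I1ge I2ge I3ge pos by linarith
qed

theorem theorem3:
  shows "\<exists>\<omega>. radial_weight \<omega> \<and> \<omega> \<notin> D_hat \<and>
           radial_weight (omega_tilde \<omega>) \<and> omega_tilde \<omega> \<in> D_hat"
proof (intro exI[of _ w] conjI)
  show "radial_weight w" by (rule w_radial)
  show "w \<notin> D_hat" by (rule w_not_D)
  have rw: "radial_weight Ht"
    unfolding radial_weight_def omega_hat_def using Ht_integrable HT_main(2) Ht_nonneg by auto
  then show "radial_weight (omega_tilde w)" unfolding tilde_w .
  show "omega_tilde w \<in> D_hat" unfolding tilde_w D_hat_def omega_hat_def
    using rw HT_main(1) by (auto intro!: exI[of _ 2])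
qed

end
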